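(* Let $a,k,d,e$ be integers with $0\le a\le k$, $1\le d\le k$, and $e=d$ or $2e=d$. Then for all integers $m,n\ge0$, $${}_d\overline{b}_{dk+e,\,da+d}(m,n)-{}_d\overline{b}_{dk+e,\,da}(m,n)={}_db_{dk+e,\,dk-da+e}(m-da,\,n-m).$$
   Context: Partitions are finite non-increasing sequences of positive integers; $\phi_i$ is the number of occurrences of $i$ as a part. For an integer $N$ and integers $m,n$, ${}_db_{dk+e,N}(m,n)$ is the number of partitions of $n$ into exactly $m$ parts with $\phi_i+\phi_{i+1}<dk+e$ for all $i\ge1$, $\phi_1<N$, and $d\mid\phi_{2i}$ for all $i\ge1$; ${}_d\overline{b}_{dk+e,N}(m,n)$ is the number of partitions of $n$ into exactly $m$ parts with $\phi_i+\phi_{i+1}<dk+e$ for all $i\ge1$, $\phi_1<N$, and $d\mid\phi_{2i+1}$ for all $i\ge0$. Both counts are $0$ when $m<0$ or $n<0$. *)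

theory Defs
  imports Main "HOL-Library.Multiset"
begin

text \<open>A partition is a finite multiset of positive naturals; phi_i = count P i.
  The counts are taken with integer arguments m, n and are 0 when m < 0 or n < 0.\<close>

definition partitions_mn :: "int \<Rightarrow> int \<Rightarrow> nat multiset set" where
  "partitions_mn m n = {P. (\<forall>x\<in>#P. 0 < x) \<and> int (size P) = m \<and> int (sum_mset P) = n}"

definition b_count :: "int \<Rightarrow> int \<Rightarrow> int \<Rightarrow> int \<Rightarrow> int \<Rightarrow> nat" where
  "b_count d L N m n =
     (if m < 0 \<or> n < 0 then 0 else
      card {P \<in> partitions_mn m n.
              (\<forall>i\<ge>1. int (count P i + count P (i+1)) < L) \<and>
              int (count P 1) < N \<and>
              (\<forall>i\<ge>1. d dvd int (count P (2*i)))})"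

definition bbar_count :: "int \<Rightarrow> int \<Rightarrow> int \<Rightarrow> int \<Rightarrow> int \<Rightarrow> nat" where
  "bbar_count d L N m n =
     (if m < 0 \<or> n < 0 then 0 else
      card {P \<in> partitions_mn m n.
              (\<forall>i\<ge>1. int (count P i + count P (i+1)) < L) \<and>
              int (count P 1) < N \<and>
              (\<forall>i\<ge>0. d dvd int (count P (2*i+1)))})"

end

theory Submission
  imports Defs
begin

lemma mem_le_sum: "(x::nat) \<in># P \<Longrightarrow> x \<le> sum_mset P"
  by (induction P) auto

lemma fin_part: "finite (partitions_mn m n)"
proof -
  have "partitions_mn m n \<subseteq> multisets_of_size {0..nat n} (nat m)"
  proof
    fix P assume "P \<in> partitions_mn m n"
    then have h: "int (size P) = m" "int (sum_mset P) = n" by (auto simp: partitions_mn_def)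
    have "\<forall>x\<in>#P. x \<le> sum_mset P" by (simp add: mem_le_sum)
    moreover have "nat n = sum_mset P" "nat m = size P" using h by (metis nat_int)+
    ultimately show "P \<in> multisets_of_size {0..nat n} (nat m)"
      by (auto simp: multisets_of_size_def)
  qed
  then show ?thesis by (rule finite_subset) auto
qed

lemma cnt_suc0: "count (image_mset Suc Q) 0 = 0"
  by (induction Q) auto

lemma cnt_sucS: "count (image_mset Suc Q) (Suc i) = count Q i"
  by (induction Q) auto

lemma sum_suc: "sum_mset (image_mset Suc Q) = sum_mset Q + size Q"
  by (induction Q) auto

definition gg :: "nat multiset \<Rightarrow> nat multiset" where
  "gg P = image_mset (\<lambda>x. x - 1) (filter_mset (\<lambda>x. 2 \<le> x) P)"

lemma gg_cnt: "count (gg P) i = (if i = 0 then 0 else count P (i+1))"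
  unfolding gg_def by (induction P) auto

lemma gg_pos: "\<forall>x\<in>#gg P. 0 < x"
  using gg_cnt by (metis count_eq_zero_iff gr0I)

definition ff :: "nat \<Rightarrow> nat multiset \<Rightarrow> nat multiset" where
  "ff c Q = image_mset Suc Q + replicate_mset c 1"

lemma ff_cnt0: "count (ff c Q) 0 = 0"
  by (simp add: ff_def cnt_suc0)

lemma ff_cnt1: "0 \<notin># Q \<Longrightarrow> count (ff c Q) 1 = c"
  using cnt_sucS[of Q 0] by (simp add: ff_def count_eq_zero_iff)

lemma ff_cntS: "i \<ge> 1 \<Longrightarrow> count (ff c Q) (Suc i) = count Q i"
  by (simp add: ff_def cnt_sucS)

lemma ff_gg: assumes "\<forall>x\<in>#P. 0 < x" "count P 1 = c" shows "ff c (gg P) = P"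
proof (rule multiset_eqI)
  fix x
  show "count (ff c (gg P)) x = count P x"
  proof (cases x)
    case 0 then show ?thesis using assms ff_cnt0 by (metis count_eq_zero_iff less_irrefl)
  next
    case (Suc j)
    show ?thesis
    proof (cases j)
      case 0 then show ?thesis using Suc assms ff_cnt1[of "gg P" c] gg_cnt[of P 0]
        by (simp add: count_eq_zero_iff)
    next
      case (Suc l) then show ?thesis using \<open>x = Suc j\<close> ff_cntS[of j c "gg P"] gg_cnt[of P j] by simp
    qed
  qed
qed

lemma ff_pos: "\<forall>x\<in>#ff c Q. 0 < x"
  by (auto simp: ff_def)

lemma ff_size: "size (ff c Q) = size Q + c" by (simp add: ff_def)
lemma ff_sum: "sum_mset (ff c Q) = sum_mset Q + size Q + c" by (simp add: ff_def sum_suc)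

lemma ff_inj: "inj (ff c)"
proof (rule injI)
  fix Q R assume "ff c Q = ff c R"
  then have "image_mset Suc Q = image_mset Suc R" by (simp add: ff_def)
  then show "Q = R" by (metis image_mset_cong_pair multiset.inj_map_strong nat.inject)
qed

lemma key1: assumes "\<forall>x\<in>#Q. 0 < x"
  shows "(ff c Q \<in> partitions_mn m n) = (Q \<in> partitions_mn (m - int c) (n - m))"
proof -
  have "int (size (ff c Q)) = int (size Q) + int c" by (simp add: ff_size)
  moreover have "int (sum_mset (ff c Q)) = int (sum_mset Q) + int (size Q) + int c"
    by (simp add: ff_sum)
  ultimately show ?thesis using assms ff_pos[of c Q] unfolding partitions_mn_def mem_Collect_eq
    by (smt (verit))
qed

lemma key2: assumes "0 \<notin># Q" "d dvd int c"
  shows "((\<forall>i\<ge>1. int (count (ff c Q) i + count (ff c Q) (i+1)) < L) \<and> count (ff c Q) 1 = c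
          \<and> (\<forall>i\<ge>0. d dvd int (count (ff c Q) (2*i+1))))
     \<longleftrightarrow> ((\<forall>i\<ge>1. int (count Q i + count Q (i+1)) < L) \<and> int (count Q 1) < L - int c
          \<and> (\<forall>i\<ge>1. d dvd int (count Q (2*i))))"
proof -
  have c1: "count (ff c Q) 1 = c" using assms ff_cnt1 by blast
  have cS: "\<And>i. i \<ge> 1 \<Longrightarrow> count (ff c Q) (i+1) = count Q i"
    using ff_cntS by (metis Suc_eq_plus1)
  have c2: "count (ff c Q) (1+1) = count Q 1" using cS[of 1] by blast
  have A: "(\<forall>i\<ge>1. int (count (ff c Q) i + count (ff c Q) (i+1)) < L) \<longleftrightarrow>
     ((\<forall>i\<ge>1. int (count Q i + count Q (i+1)) < L) \<and> int (count Q 1) < L - int c)"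
  proof
    assume h: "\<forall>i\<ge>1. int (count (ff c Q) i + count (ff c Q) (i+1)) < L"
    have "int (count (ff c Q) 1 + count (ff c Q) (1+1)) < L" using h by blast
    then have "int (count Q 1) < L - int c" unfolding c1 c2 by linarith
    moreover have "\<forall>i\<ge>1. int (count Q i + count Q (i+1)) < L"
    proof (intro allI impI)
      fix i :: nat assume i: "1 \<le> i"
      have i1: "1 \<le> i+1" by simp
      have "int (count (ff c Q) (i+1) + count (ff c Q) (i+1+1)) < L" using h i1 by blast
      moreover have "count (ff c Q) (i+1) = count Q i" using cS[OF i] .
      moreover have "count (ff c Q) (i+1+1) = count Q (i+1)" using cS[OF i1] .
      ultimately show "int (count Q i + count Q (i+1)) < L" by simp
    qed
    ultimately show "(\<forall>i\<ge>1. int (count Q i + count Q (i+1)) < L) \<and> int (count Q 1) < L - int c" by blast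
  next
    assume h: "(\<forall>i\<ge>1. int (count Q i + count Q (i+1)) < L) \<and> int (count Q 1) < L - int c"
    show "\<forall>i\<ge>1. int (count (ff c Q) i + count (ff c Q) (i+1)) < L"
    proof (intro allI impI)
      fix i :: nat assume i: "1 \<le> i"
      show "int (count (ff c Q) i + count (ff c Q) (i+1)) < L"
      proof (cases "i = 1")
        case True
        have "int (count (ff c Q) 1 + count (ff c Q) (1+1)) < L" unfolding c1 c2 using h by linarith
        then show ?thesis using True by blast
      next
        case False
        then obtain j where j: "i = j+1" "j \<ge> 1" using i by (cases i) auto
        have e1: "count (ff c Q) i = count Q j" using cS j by blast
        have j1: "1 \<le> j+1" by simp
        have e2: "count (ff c Q) (i+1) = count Q (j+1)" using cS[OF j1] j(1) by simp
        have "int (count Q j + count Q (j+1)) < L" using h j by blast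
        then show ?thesis unfolding e1 e2 .
      qed
    qed
  qed
  have B: "(\<forall>i\<ge>0. d dvd int (count (ff c Q) (2*i+1))) \<longleftrightarrow> (\<forall>i\<ge>1. d dvd int (count Q (2*i)))"
  proof
    assume h: "\<forall>i\<ge>0. d dvd int (count (ff c Q) (2*i+1))"
    show "\<forall>i\<ge>1. d dvd int (count Q (2*i))"
    proof (intro allI impI)
      fix i :: nat assume i: "1 \<le> i"
      have i2: "1 \<le> 2*i" using i by linarith
      have eq: "count (ff c Q) (2*i+1) = count Q (2*i)" using cS[OF i2] .
      have "d dvd int (count (ff c Q) (2*i+1))" using h by blast
      then show "d dvd int (count Q (2*i))" unfolding eq .
    qed
  next
    assume h: "\<forall>i\<ge>1. d dvd int (count Q (2*i))"
    show "\<forall>i\<ge>0. d dvd int (count (ff c Q) (2*i+1))"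
    proof (intro allI impI)
      fix i :: nat
      show "d dvd int (count (ff c Q) (2*i+1))"
      proof (cases "i = 0")
        case True then show ?thesis using c1 assms(2) by simp
      next
        case False
        then have i2: "1 \<le> 2*i" by linarith
        have eq: "count (ff c Q) (2*i+1) = count Q (2*i)" using cS[OF i2] .
        have "1 \<le> i" using False by linarith
        then have "d dvd int (count Q (2*i))" using h by blast
        then show ?thesis unfolding eq .
      qed
    qed
  qed
  show ?thesis by (simp only: A B c1 simp_thms conj_assoc)
qed

lemma dvd_aux: fixes d a x :: int assumes "1 \<le> d" "d dvd x" "x < d*a + d" "\<not> x < d*a"
  shows "x = d*a"
proof -
  obtain t where t: "x = d*t" using assms(2) by blast
  have "d*t < d*(a+1)" using assms(3) t by (simp add: algebra_simps)
  then have "t < a+1" using assms(1) by (simp add: mult_less_cancel_left)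
  moreover have "d*a \<le> d*t" using assms(4) t by simp
  then have "a \<le> t" using assms(1) by (simp add: mult_le_cancel_left)
  ultimately show ?thesis using t by simp
qed

lemma part_neg: assumes "m < 0 \<or> n < 0" shows "partitions_mn m n = {}"
proof (rule equals0I)
  fix P assume "P \<in> partitions_mn m n"
  then have h: "int (size P) = m" "int (sum_mset P) = n" unfolding partitions_mn_def mem_Collect_eq by blast+
  have "int (size P) \<ge> 0" "int (sum_mset P) \<ge> 0" by (rule of_nat_0_le_iff)+
  then show False using assms h by linarith
qed

theorem mainTheorem5:
  fixes a k d e m n :: int
  assumes "0 \<le> a" "a \<le> k" "1 \<le> d" "d \<le> k" "e = d \<or> 2 * e = d"
    and "0 \<le> m" "0 \<le> n"
  shows "int (bbar_count d (d*k+e) (d*a+d) m n) - int (bbar_count d (d*k+e) (d*a) m n)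
         = int (b_count d (d*k+e) (d*k-d*a+e) (m-d*a) (n-m))"
proof -
  define L where "L = d*k+e"
  define c where "c = nat (d*a)"
  have ic: "int c = d*a" unfolding c_def using assms(1,3) by simp
  define S where "S N = {P \<in> partitions_mn m n.
              (\<forall>i\<ge>1. int (count P i + count P (i+1)) < L) \<and>
              int (count P 1) < N \<and>
              (\<forall>i\<ge>0. d dvd int (count P (2*i+1)))}" for N
  have bb: "bbar_count d L N m n = card (S N)" for N
    unfolding bbar_count_def S_def using assms(6,7) by simp
  define B where "B = {P \<in> partitions_mn m n.
              (\<forall>i\<ge>1. int (count P i + count P (i+1)) < L) \<and>
              count P 1 = c \<and>
              (\<forall>i\<ge>0. d dvd int (count P (2*i+1)))}"
  define C where "C = {Q \<in> partitions_mn (m-d*a) (n-m).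
              (\<forall>i\<ge>1. int (count Q i + count Q (i+1)) < L) \<and>
              int (count Q 1) < L - int c \<and>
              (\<forall>i\<ge>1. d dvd int (count Q (2*i)))}"
  have bc: "b_count d L (d*k-d*a+e) (m-d*a) (n-m) = card C"
  proof (cases "m - d*a < 0 \<or> n - m < 0")
    case True
    then have "C = {}" unfolding C_def using part_neg by blast
    then show ?thesis using True unfolding b_count_def by simp
  next
    case False
    have "L - int c = d*k-d*a+e" using ic L_def by simp
    then show ?thesis using False unfolding b_count_def C_def by simp
  qed
  have SU: "S (d*a+d) = S (d*a) \<union> B"
  proof
    show "S (d*a+d) \<subseteq> S (d*a) \<union> B"
    proof
      fix P assume P: "P \<in> S (d*a+d)"
      have "\<forall>i\<ge>(0::nat). d dvd int (count P (2*i+1))" using P unfolding S_def by blast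
      then have "d dvd int (count P (2*0+1))" by blast
      then have dv: "d dvd int (count P 1)" by simp
      show "P \<in> S (d*a) \<union> B"
      proof (cases "int (count P 1) < d*a")
        case True then show ?thesis using P unfolding S_def by auto
      next
        case False
        then have "int (count P 1) = d*a" using dvd_aux[OF assms(3) dv] P unfolding S_def by auto
        then have "count P 1 = c" using ic by simp
        then show ?thesis using P unfolding S_def B_def by auto
      qed
    qed
  next
    show "S (d*a) \<union> B \<subseteq> S (d*a+d)"
      using ic assms(3) unfolding S_def B_def by auto
  qed
  have dis: "S (d*a) \<inter> B = {}" using ic unfolding S_def B_def by auto
  have fin: "finite (S N)" for N unfolding S_def using fin_part by simp
  have finB: "finite B" unfolding B_def using fin_part by simp
  have cardS: "card (S (d*a+d)) = card (S (d*a)) + card B"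
    using SU dis fin finB card_Un_disjoint by metis
  have dc: "d dvd int c" using ic by simp
  have BC: "B = ff c ` C"
  proof
    show "ff c ` C \<subseteq> B"
    proof
      fix P assume "P \<in> ff c ` C"
      then obtain Q where Q: "Q \<in> C" "P = ff c Q" by blast
      have pos: "\<forall>x\<in>#Q. 0 < x" using Q(1) unfolding C_def partitions_mn_def by auto
      then have z: "0 \<notin># Q" by auto
      have q1: "Q \<in> partitions_mn (m - int c) (n - m)" using Q(1) ic unfolding C_def by simp
      have p1: "ff c Q \<in> partitions_mn m n" using iffD2[OF key1[OF pos, of c m n] q1] .
      have cq: "(\<forall>i\<ge>1. int (count Q i + count Q (i+1)) < L) \<and> int (count Q 1) < L - int c
          \<and> (\<forall>i\<ge>1. d dvd int (count Q (2*i)))" using Q(1) unfolding C_def by blast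
      have cp: "(\<forall>i\<ge>1. int (count (ff c Q) i + count (ff c Q) (i+1)) < L) \<and> count (ff c Q) 1 = c
          \<and> (\<forall>i\<ge>0. d dvd int (count (ff c Q) (2*i+1)))" using iffD2[OF key2[OF z dc, of L] cq] .
      have "ff c Q \<in> B" unfolding B_def using p1 cp by blast
      then show "P \<in> B" using Q(2) by simp
    qed
  next
    show "B \<subseteq> ff c ` C"
    proof
      fix P assume P: "P \<in> B"
      have pos: "\<forall>x\<in>#P. 0 < x" using P unfolding B_def partitions_mn_def by auto
      have P1: "count P 1 = c" using P unfolding B_def by auto
      have fg: "ff c (gg P) = P" using ff_gg[OF pos P1] .
      have pg: "\<forall>x\<in>#gg P. 0 < x" by (rule gg_pos)
      then have z: "0 \<notin># gg P" by auto
      have p1: "ff c (gg P) \<in> partitions_mn m n" using P fg unfolding B_def by simp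
      have q1: "gg P \<in> partitions_mn (m - int c) (n - m)" using iffD1[OF key1[OF pg, of c m n] p1] .
      have cp: "(\<forall>i\<ge>1. int (count (ff c (gg P)) i + count (ff c (gg P)) (i+1)) < L) \<and> count (ff c (gg P)) 1 = c
          \<and> (\<forall>i\<ge>0. d dvd int (count (ff c (gg P)) (2*i+1)))" using P fg unfolding B_def by simp
      have cq: "(\<forall>i\<ge>1. int (count (gg P) i + count (gg P) (i+1)) < L) \<and> int (count (gg P) 1) < L - int c
          \<and> (\<forall>i\<ge>1. d dvd int (count (gg P) (2*i)))" using iffD1[OF key2[OF z dc, of L] cp] .
      have "gg P \<in> C" unfolding C_def using q1 cq ic by simp
      then show "P \<in> ff c ` C" using fg by force
    qed
  qed
  have "card B = card C" unfolding BC by (rule card_image) (meson ff_inj inj_on_subset subset_UNIV)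
  then show ?thesis using bb bc cardS unfolding L_def by simp
qed

end
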